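(* For every $k\in\mathbb{N}$ and every $i,j\in\{0,1,\dots,2^k-1\}$, $\mathrm{lcis}(\alpha_k^0\cdots\alpha_k^i,\ \beta_k^0\cdots\beta_k^j)=i+j+2^k$.
   Context: $\mathrm{lcis}(X,Y)$ denotes the length of the longest strictly increasing common subsequence of integer sequences $X,Y$. For $A=\langle a_0,\dots,a_{n-1}\rangle$, $\mathrm{inflate}(A)=\langle 2a_0-1,2a_0,\dots,2a_{n-1}-1,2a_{n-1}\rangle$; $\circ$ and juxtaposition denote concatenation. Separator sequences: for each $k\in\mathbb{N}$, $A_k=\alpha_k^0\cdots\alpha_k^{2^k-1}$ and $B_k=\beta_k^0\cdots\beta_k^{2^k-1}$ are concatenations of $2^k$ blocks, defined inductively. $A_0=B_0=\langle 1\rangle$ (a single block). Let $s_k$ be the largest element of $A_k$ and $B_k$ (one has $s_k=2^{k+2}-3$). For $i\in\{0,\dots,2^k-1\}$: $\alpha_{k+1}^{2i}=\mathrm{inflate}(\alpha_k^i)\circ\langle 2s_k+2\rangle$, $\alpha_{k+1}^{2i+1}=\langle 2s_k+1,2s_k+3\rangle$, $\beta_{k+1}^{2i}=\mathrm{inflate}(\beta_k^i)\circ\langle 2s_k+1\rangle$, $\beta_{k+1}^{2i+1}=\langle 2s_k+2,2s_k+3\rangle$. *)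

theory Defs
  imports Main "HOL-Library.Sublist"
begin

definition lcis :: "int list \<Rightarrow> int list \<Rightarrow> nat" where
  "lcis X Y = Max {length Z | Z. subseq Z X \<and> subseq Z Y \<and> sorted_wrt (<) Z}"

definition inflate :: "int list \<Rightarrow> int list" where
  "inflate A = concat (map (\<lambda>a. [2*a - 1, 2*a]) A)"

text \<open>sep_blocks k = (alpha_k, beta_k), where alpha_k i is the block alpha_k^i
  (meaningful for i < 2^k). s_k is the largest element of A_k and B_k.\<close>
primrec sep_blocks :: "nat \<Rightarrow> (nat \<Rightarrow> int list) \<times> (nat \<Rightarrow> int list)" where
  "sep_blocks 0 = (\<lambda>i. [1], \<lambda>i. [1])"
| "sep_blocks (Suc k) =
    (let a = fst (sep_blocks k); b = snd (sep_blocks k);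
         s = Max (set (concat (map a [0..<2^k])) \<union> set (concat (map b [0..<2^k])))
     in (\<lambda>i. if even i then inflate (a (i div 2)) @ [2*s + 2] else [2*s + 1, 2*s + 3],
         \<lambda>i. if even i then inflate (b (i div 2)) @ [2*s + 1] else [2*s + 2, 2*s + 3]))"

definition alpha :: "nat \<Rightarrow> nat \<Rightarrow> int list" where
  "alpha k i = fst (sep_blocks k) i"

definition beta :: "nat \<Rightarrow> nat \<Rightarrow> int list" where
  "beta k i = snd (sep_blocks k) i"

end

theory Submission
  imports Defs
begin


lemma lcis_set_finite: "finite {length Z | Z. subseq Z X \<and> subseq Z Y \<and> sorted_wrt (<) Z}"
proof -
  have "{length Z | Z. subseq Z X \<and> subseq Z Y \<and> sorted_wrt (<) Z} \<subseteq> {..length X}"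
    using list_emb_length by fastforce
  then show ?thesis using finite_subset by blast
qed

lemma lcis_ge:
  assumes "sorted_wrt (<) Z" "subseq Z X" "subseq Z Y"
  shows "length Z \<le> lcis X Y"
  unfolding lcis_def using assms by (intro Max_ge[OF lcis_set_finite]) blast

lemma lcis_obtain:
  obtains Z where "sorted_wrt (<) Z" "subseq Z X" "subseq Z Y" "length Z = lcis X Y"
proof -
  have "lcis X Y \<in> {length Z | Z. subseq Z X \<and> subseq Z Y \<and> sorted_wrt (<) Z}"
    unfolding lcis_def by (rule Max_in[OF lcis_set_finite]) (use list_emb_Nil in fastforce)
  then show ?thesis using that by force
qed

lemma lcis_eqI:
  assumes "sorted_wrt (<) Z" "subseq Z X" "subseq Z Y" "length Z = n"
    and "\<And>Z. sorted_wrt (<) Z \<Longrightarrow> subseq Z X \<Longrightarrow> subseq Z Y \<Longrightarrow> length Z \<le> n"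
  shows "lcis X Y = n"
  by (metis assms le_antisym lcis_ge lcis_obtain)

lemma inflate_Nil[simp]: "inflate [] = []" by (simp add: inflate_def)
lemma inflate_Cons[simp]: "inflate (a # A) = (2*a-1) # (2*a) # inflate A" by (simp add: inflate_def)
lemma inflate_append[simp]: "inflate (A @ B) = inflate A @ inflate B" by (simp add: inflate_def)

lemma set_inflate: "x \<in> set (inflate A) \<Longrightarrow> \<exists>a\<in>set A. x = 2*a-1 \<or> x = 2*a"
  by (induction A) auto

lemma subseq_inflate: "subseq Z X \<Longrightarrow> subseq (inflate Z) (inflate X)"
  by (induction rule: list_emb.induct) (auto simp: subseq_drop_many)

lemma sorted_inflate: "sorted_wrt (<) Z \<Longrightarrow> sorted_wrt (<) (inflate Z)"
  by (induction Z) (auto dest!: set_inflate)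

lemma subseq_filter_all: "subseq L P \<Longrightarrow> \<forall>x\<in>set L. Q x \<Longrightarrow> subseq L (filter Q P)"
  by (metis filter_True subseq_filter)

lemma sorted_split: "sorted_wrt (<) Z \<Longrightarrow> Z = filter (\<lambda>x. x \<le> (c::int)) Z @ filter (\<lambda>x. \<not> x \<le> c) Z"
proof (induction Z)
  case (Cons x Z)
  show ?case
  proof (cases "x \<le> c")
    case False
    then have "\<forall>y\<in>set Z. \<not> y \<le> c" using Cons.prems by auto
    then show ?thesis using False by (simp add: filter_False)
  qed (use Cons in auto)
qed simp

lemma sorted_len_bound:
  assumes "sorted_wrt (<) (xs::int list)" "\<forall>x\<in>set xs. lo < x \<and> x \<le> hi"
  shows "length xs \<le> nat (hi - lo)"
proof -
  have "distinct xs" using assms(1) strict_sorted_iff by blast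
  then have "length xs = card (set xs)" by (simp add: distinct_card)
  also have "\<dots> \<le> card {lo<..hi}" using assms(2) by (intro card_mono) auto
  finally show ?thesis by simp
qed

lemma concat_split:
  "concat (map f [0..<n]) = P @ x # R \<Longrightarrow> \<exists>u<n. \<exists>B1 B2. f u = B1 @ x # B2 \<and>
     P = concat (map f [0..<u]) @ B1 \<and> R = B2 @ concat (map f [Suc u..<n])"
proof (induction n arbitrary: R)
  case 0 then show ?case by simp
next
  case (Suc n)
  have e: "concat (map f [0..<n]) @ f n = P @ x # R" using Suc.prems by simp
  show ?case
  proof (cases "length P < length (concat (map f [0..<n]))")
    case True
    then obtain R' where "concat (map f [0..<n]) = P @ x # R'" "R = R' @ f n"
      using e by (auto simp: append_eq_append_conv2 append_eq_Cons_conv)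
    then show ?thesis using Suc.IH by fastforce
  next
    case False
    then obtain B1 where "P = concat (map f [0..<n]) @ B1" "f n = B1 @ x # R"
      using e by (auto simp: append_eq_append_conv2)
    then show ?thesis by (intro exI[of _ n]) auto
  qed
qed



fun defl :: "int list \<Rightarrow> int list" where
  "defl [] = []"
| "defl [x] = [(x+1) div 2]"
| "defl (x # y # zs) = (if (x+1) div 2 = (y+1) div 2 then (x+1) div 2 # defl zs
                         else (x+1) div 2 # defl (y # zs))"

lemma defl_len: "length L \<le> 2 * length (defl L)"
  by (induction L rule: defl.induct) auto

lemma defl_set: "w \<in> set (defl L) \<Longrightarrow> \<exists>x\<in>set L. w = (x+1) div 2"
  by (induction L rule: defl.induct) (auto split: if_splits)

lemma defl_sorted: "sorted_wrt (<) L \<Longrightarrow> sorted_wrt (<) (defl L)"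
proof (induction L rule: defl.induct)
  case (3 x y zs)
  show ?case
  proof (cases "(x+1) div 2 = (y+1) div 2")
    case True
    have "\<forall>w\<in>set (defl zs). (x+1) div 2 < w"
    proof
      fix w assume "w \<in> set (defl zs)"
      then obtain z where "z \<in> set zs" "w = (z+1) div 2" using defl_set by blast
      moreover have "x < y" "y < z" using 3(3) \<open>z \<in> set zs\<close> by auto
      ultimately show "(x+1) div 2 < w" using True by presburger
    qed
    then show ?thesis using True 3 by auto
  next
    case False
    have "\<forall>w\<in>set (defl (y#zs)). (x+1) div 2 < w"
    proof
      fix w assume "w \<in> set (defl (y#zs))"
      then obtain z where "z \<in> set (y#zs)" "w = (z+1) div 2" using defl_set by blast
      moreover have "x < y" "y \<le> z" using 3(3) \<open>z \<in> set (y#zs)\<close> by auto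
      ultimately show "(x+1) div 2 < w" using False by presburger
    qed
    then show ?thesis using False 3 by auto
  qed
qed auto

lemma defl_subseq: "sorted_wrt (<) L \<Longrightarrow> subseq L (inflate P) \<Longrightarrow> subseq (defl L) P"
proof (induction P arbitrary: L)
  case Nil then show ?case using list_emb_Nil2 by fastforce
next
  case (Cons p P)
  show ?case
  proof (cases L)
    case Nil then show ?thesis by simp
  next
    case (Cons x L')
    note L = this
    have s: "subseq (x # L') ((2*p-1) # 2*p # inflate P)" using Cons.prems L by simp
    have sL': "sorted_wrt (<) L'" using Cons.prems L by simp
    show ?thesis
    proof (cases "x = 2*p-1")
      case True
      then have s2: "subseq L' (2*p # inflate P)" using s by simp
      show ?thesis
      proof (cases L')
        case Nil then show ?thesis using L True by simp
      next
        case (Cons y zs)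
        have "x < y" using Cons.prems L Cons by simp
        show ?thesis
        proof (cases "y = 2*p")
          case True
          then have "subseq zs (inflate P)" using s2 Cons by simp
          moreover have "sorted_wrt (<) zs" using sL' Cons by simp
          ultimately have "subseq (defl zs) P" using Cons.IH by blast
          then show ?thesis using L Cons True \<open>x = 2*p-1\<close> by simp
        next
          case False
          then have "subseq L' (inflate P)" using s2 Cons by simp
          then have "subseq (defl L') P" using Cons.IH sL' by blast
          moreover have "(y+1) div 2 \<noteq> p" using False \<open>x < y\<close> \<open>x = 2*p-1\<close> by presburger
          ultimately show ?thesis using L Cons \<open>x = 2*p-1\<close> by simp
        qed
      qed
    next
      case False
      then have s2: "subseq (x # L') (2*p # inflate P)" using s by simp
      show ?thesis
      proof (cases "x = 2*p")
        case True
        then have s3: "subseq L' (inflate P)" using s2 by simp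
        then have ih: "subseq (defl L') P" using Cons.IH sL' by blast
        show ?thesis
        proof (cases L')
          case Nil then show ?thesis using L True by simp
        next
          case (Cons y zs)
          have "x < y" using Cons.prems L Cons by simp
          then have "(y+1) div 2 \<noteq> p" using True by presburger
          then show ?thesis using L Cons True ih by simp
        qed
      next
        case False
        then have "subseq (x # L') (inflate P)" using s2 by simp
        then have "subseq (defl L) P" using Cons.IH Cons.prems L by blast
        then show ?thesis by (simp add: subseq_drop_many[of _ _ "[p]", simplified])
      qed
    qed
  qed
qed

lemma deflate_bound:
  assumes "sorted_wrt (<) L" "subseq L (inflate P)" "subseq L (inflate Q)"
  shows "length L \<le> 2 * lcis P Q"
proof -
  have "length (defl L) \<le> lcis P Q"
    using assms by (intro lcis_ge defl_sorted defl_subseq)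
  then show ?thesis using defl_len[of L] by linarith
qed



lemma div2_lt: "u < 2^Suc k \<Longrightarrow> u div 2 < (2::nat)^k"
  by (simp add: less_mult_imp_div_less mult.commute)

definition G :: "(nat \<Rightarrow> int list) \<Rightarrow> int \<Rightarrow> int \<Rightarrow> int \<Rightarrow> nat \<Rightarrow> int list" where
  "G f s c d i = (if even i then inflate (f (i div 2)) @ [c] else [d, 2*s+3])"

lemma inflate_le:
  assumes "\<forall>x\<in>set A. x \<le> s" "x \<in> set (inflate A)" shows "x \<le> 2*s"
  using set_inflate[OF assms(2)] assms(1) by auto

lemma G_filter:
  assumes bnd: "\<forall>t<2^k. \<forall>x\<in>set (f t). x \<le> s" and cd: "2*s < c" "2*s < d"
  shows "n \<le> 2^Suc k \<Longrightarrow> filter (\<lambda>x. x \<le> 2*s) (concat (map (G f s c d) [0..<n]))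
     = inflate (concat (map f [0..<(n+1) div 2]))"
proof (induction n)
  case 0 then show ?case by simp
next
  case (Suc n)
  then have IH: "filter (\<lambda>x. x \<le> 2*s) (concat (map (G f s c d) [0..<n]))
     = inflate (concat (map f [0..<(n+1) div 2]))" by simp
  have nk: "n div 2 < 2^k" using Suc.prems div2_lt by simp
  show ?case
  proof (cases "even n")
    case True
    have "\<forall>x\<in>set (inflate (f (n div 2))). x \<le> 2*s"
      using bnd nk inflate_le by blast
    then have "filter (\<lambda>x. x \<le> 2*s) (G f s c d n) = inflate (f (n div 2))"
      using True cd by (simp add: G_def)
    moreover have "(Suc n + 1) div 2 = Suc (n div 2)" "(n+1) div 2 = n div 2" using True by presburger+
    ultimately show ?thesis using IH by simp
  next
    case False
    then have "filter (\<lambda>x. x \<le> 2*s) (G f s c d n) = []"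
      using cd by (simp add: G_def)
    moreover have "(Suc n + 1) div 2 = (n+1) div 2" using False by presburger
    ultimately show ?thesis using IH by simp
  qed
qed

lemma G_le:
  assumes bnd: "\<forall>t<2^k. \<forall>x\<in>set (f t). x \<le> s" and cd: "c \<le> 2*s+3" "d \<le> 2*s+3"
    and "n \<le> 2^Suc k" "x \<in> set (concat (map (G f s c d) [0..<n]))"
  shows "x \<le> 2*s+3"
proof -
  obtain t where t: "t < n" "x \<in> set (G f s c d t)" using assms(4,5) by auto
  have "t div 2 < 2^k" using t assms(4) div2_lt by simp
  then show ?thesis using t cd bnd inflate_le[of "f (t div 2)" s x]
    by (auto simp: G_def split: if_splits)
qed


lemma G_side:
  assumes bnd: "\<forall>t<2^k. \<forall>x\<in>set (f t). x \<le> s" and cd: "2*s < c" "2*s < d"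
    and i: "i < 2^Suc k"
    and X: "concat (map (G f s c d) [0..<Suc i]) = P @ h # R" and h: "2*s < h"
  shows "\<exists>u\<le>i. filter (\<lambda>x. x \<le> 2*s) P = inflate (concat (map f [0..<Suc (u div 2)])) \<and>
     ((even u \<and> h = c \<and> R = concat (map (G f s c d) [Suc u..<Suc i])) \<or>
      (odd u \<and> h = d \<and> R = (2*s+3) # concat (map (G f s c d) [Suc u..<Suc i])) \<or>
      (odd u \<and> h = 2*s+3 \<and> R = concat (map (G f s c d) [Suc u..<Suc i])))"
proof -
  obtain u B1 B2 where u: "u < Suc i" "G f s c d u = B1 @ h # B2"
    "P = concat (map (G f s c d) [0..<u]) @ B1" "R = B2 @ concat (map (G f s c d) [Suc u..<Suc i])"
    using concat_split[OF X] by blast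
  have uk: "u \<le> 2^Suc k" "u div 2 < 2^k" using u(1) i div2_lt[of u k] by auto
  have F: "filter (\<lambda>x. x \<le> 2*s) (concat (map (G f s c d) [0..<u]))
     = inflate (concat (map f [0..<(u+1) div 2]))"
    using G_filter[OF bnd cd uk(1)] .
  show ?thesis
  proof (cases "even u")
    case True
    have low: "\<forall>x\<in>set (inflate (f (u div 2))). x \<le> 2*s"
      using bnd uk inflate_le by blast
    have eq: "inflate (f (u div 2)) @ [c] = B1 @ h # B2" using u(2) True by (simp add: G_def)
    have "B2 = [] \<and> B1 = inflate (f (u div 2)) \<and> h = c"
    proof (cases B2 rule: rev_cases)
      case Nil then show ?thesis using eq by simp
    next
      case (snoc B2' y)
      then have "h \<in> set (inflate (f (u div 2)))" using eq by auto
      then show ?thesis using low h by auto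
    qed
    moreover have "(u+1) div 2 = u div 2" using True by presburger
    ultimately show ?thesis using u F True low cd
      by (intro exI[of _ u]) (auto simp: filter_True)
  next
    case False
    have eq: "[d, 2*s+3] = B1 @ h # B2" using u(2) False by (simp add: G_def)
    have "(B1 = [] \<and> h = d \<and> B2 = [2*s+3]) \<or> (B1 = [d] \<and> h = 2*s+3 \<and> B2 = [])"
      using eq by (auto simp: Cons_eq_append_conv append_eq_Cons_conv)
    moreover have "(u+1) div 2 = Suc (u div 2)" using False by presburger
    ultimately show ?thesis using u F False cd
      by (intro exI[of _ u]) auto
  qed
qed


lemma G_low:
  assumes bnd: "\<forall>t<2^k. \<forall>x\<in>set (f t). x \<le> s" and cd: "2*s < c" "2*s < d"
    and i: "i < 2^Suc k"
  shows "subseq (inflate (concat (map f [0..<Suc (i div 2)])) @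
     (if even i then [c] else [c, d, 2*s+3])) (concat (map (G f s c d) [0..<Suc i]))"
proof -
  define i0 where "i0 = 2 * (i div 2)"
  have i0: "even i0" "i = i0 \<or> i = Suc i0" "i0 div 2 = i div 2" "(i0 + 1) div 2 = i div 2"
    unfolding i0_def by presburger+
  have ik: "i0 \<le> 2^Suc k" using i i0 by auto
  define m where "m = i div 2"
  define X0 where "X0 = concat (map (G f s c d) [0..<i0])"
  have F: "filter (\<lambda>x. x \<le> 2*s) X0 = inflate (concat (map f [0..<m]))"
    using G_filter[OF bnd cd ik] i0 unfolding X0_def m_def by simp
  have e: "inflate (concat (map f [0..<Suc m])) @ [c] = filter (\<lambda>x. x \<le> 2*s) X0 @ (inflate (f m) @ [c])"
    using F by simp
  have i0m: "i0 div 2 = m" "i div 2 = m" using i0(3) m_def by auto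
  have s1: "subseq (inflate (concat (map f [0..<Suc m])) @ [c])
      (X0 @ inflate (f m) @ [c])"
  proof -
    have "subseq (filter (\<lambda>x. x \<le> 2*s) X0 @ (inflate (f m) @ [c])) (X0 @ (inflate (f m) @ [c]))"
      by (rule list_emb_append_mono[OF subseq_filter_left subseq_order.order_refl])
    then show ?thesis using e by simp
  qed
  show ?thesis
  proof (cases "i = i0")
    case True
    have "concat (map (G f s c d) [0..<Suc i]) = X0 @ inflate (f m) @ [c]"
      using True i0(1) i0m(1) by (simp add: X0_def G_def)
    then show ?thesis using s1 True i0(1) i0m(2) by simp
  next
    case False
    then have ii: "i = Suc i0" using i0 by simp
    have "concat (map (G f s c d) [0..<Suc i]) = X0 @ inflate (f m) @ [c] @ [d, 2*s+3]"
      using ii i0(1) i0m(1) by (simp add: X0_def G_def)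
    moreover have "subseq (inflate (concat (map f [0..<Suc m])) @ [c] @ [d, 2*s+3])
        (X0 @ inflate (f m) @ [c] @ [d, 2*s+3])"
      using list_emb_append_mono[OF s1, of "[d, 2*s+3]" "[d, 2*s+3]"] by simp
    moreover have "odd i" using ii i0(1) by simp
    ultimately show ?thesis using i0m(2) by simp
  qed
qed



lemma subseq_set: "subseq Z X \<Longrightarrow> x \<in> set Z \<Longrightarrow> x \<in> set X"
  by (induction rule: list_emb.induct) auto

lemma upper:
  fixes fA fB :: "nat \<Rightarrow> int list" and s :: int
  assumes bA: "\<forall>t<2^k. \<forall>x\<in>set (fA t). x \<le> s" and bB: "\<forall>t<2^k. \<forall>x\<in>set (fB t). x \<le> s"
    and IH: "\<And>a b. a < 2^k \<Longrightarrow> b < 2^k \<Longrightarrow>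
       lcis (concat (map fA [0..<Suc a])) (concat (map fB [0..<Suc b])) = a + b + 2^k"
    and i: "i < 2^Suc k" and j: "j < 2^Suc k"
    and Zs: "sorted_wrt (<) Z"
    and ZX: "subseq Z (concat (map (G fA s (2*s+2) (2*s+1)) [0..<Suc i]))"
    and ZY: "subseq Z (concat (map (G fB s (2*s+1) (2*s+2)) [0..<Suc j]))"
  shows "length Z \<le> i + j + 2^Suc k"
proof -
  define X where "X = concat (map (G fA s (2*s+2) (2*s+1)) [0..<Suc i])"
  define Y where "Y = concat (map (G fB s (2*s+1) (2*s+2)) [0..<Suc j])"
  define lo where "lo = (\<lambda>x::int. x \<le> 2*s)"
  define L where "L = filter lo Z"
  define H where "H = filter (\<lambda>x. \<not> lo x) Z"
  have ZLH: "Z = L @ H" unfolding L_def H_def lo_def using sorted_split[OF Zs] .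
  have Llo: "\<forall>x\<in>set L. lo x" unfolding L_def by simp
  have Ls: "sorted_wrt (<) L" unfolding L_def by (rule sorted_wrt_filter[OF Zs])
  have Hs: "sorted_wrt (<) H" unfolding H_def by (rule sorted_wrt_filter[OF Zs])
  have Zle: "\<forall>x\<in>set Z. x \<le> 2*s+3"
  proof
    fix x assume "x \<in> set Z"
    then have xX: "x \<in> set (concat (map (G fA s (2*s+2) (2*s+1)) [0..<Suc i]))"
      by (rule subseq_set[OF ZX])
    have si: "Suc i \<le> 2^Suc k" using i by simp
    show "x \<le> 2*s+3" by (rule G_le[OF bA _ _ si xX]) simp_all
  qed
  have ia: "i div 2 < 2^k" "j div 2 < 2^k" using div2_lt[OF i] div2_lt[OF j] by auto
  have sK: "(2::nat)^Suc k = 2 * 2^k" by simp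
  show ?thesis
  proof (cases H)
    case Nil
    have di: "(Suc i + 1) div 2 = Suc (i div 2)" "(Suc j + 1) div 2 = Suc (j div 2)" by simp_all
    have ik: "Suc i \<le> 2^Suc k" "Suc j \<le> 2^Suc k" using i j by simp_all
    have fX: "filter lo X = inflate (concat (map fA [0..<Suc (i div 2)]))"
      using G_filter[OF bA _ _ ik(1), of "2*s+2" "2*s+1"] unfolding X_def lo_def di by simp
    have fY: "filter lo Y = inflate (concat (map fB [0..<Suc (j div 2)]))"
      using G_filter[OF bB _ _ ik(2), of "2*s+1" "2*s+2"] unfolding Y_def lo_def di by simp
    have "subseq L (filter lo X)" unfolding L_def using ZX X_def subseq_filter by blast
    then have sX: "subseq L (inflate (concat (map fA [0..<Suc (i div 2)])))" using fX by simp
    have "subseq L (filter lo Y)" unfolding L_def using ZY Y_def subseq_filter by blast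
    then have sY: "subseq L (inflate (concat (map fB [0..<Suc (j div 2)])))" using fY by simp
    have "length L \<le> 2 * lcis (concat (map fA [0..<Suc (i div 2)])) (concat (map fB [0..<Suc (j div 2)]))"
      by (rule deflate_bound[OF Ls sX sY])
    also have "\<dots> = 2 * (i div 2 + j div 2 + 2^k)" using IH ia by simp
    finally show ?thesis using ZLH Nil sK by simp
  next
    case (Cons h H')
    have "h \<in> set H" using Cons by simp
    then have "\<not> lo h" unfolding H_def by simp
    then have hhi: "2*s < h" unfolding lo_def by simp
    have H's: "\<forall>x\<in>set H'. h < x \<and> x \<le> 2*s+3"
    proof
      fix x assume x: "x \<in> set H'"
      then have "h < x" using Hs Cons by simp
      moreover have "x \<in> set Z" using x ZLH Cons by simp
      ultimately show "h < x \<and> x \<le> 2*s+3" using Zle by blast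
    qed
    have sH': "sorted_wrt (<) H'" using Hs Cons by simp
    have Hlen: "length H' \<le> nat (2*s+3 - h)" by (rule sorted_len_bound[OF sH' H's])
    have lenZ: "length Z = length L + 1 + length H'" using ZLH Cons by simp
    have ZX': "subseq (L @ h # H') X" using ZX ZLH Cons unfolding X_def by simp
    have ZY': "subseq (L @ h # H') Y" using ZY ZLH Cons unfolding Y_def by simp
    obtain PX RX where PX: "X = PX @ h # RX" "subseq L PX" "subseq H' RX"
    proof -
      obtain us vs where 1: "X = us @ vs" "subseq L us" "subseq (h # H') vs"
        using list_emb_appendD[OF ZX'] by blast
      obtain us2 v vs2 where 2: "vs = us2 @ v # vs2" "h = v" "subseq H' vs2"
        using list_emb_ConsD[OF 1(3)] by blast
      have "X = (us @ us2) @ h # vs2" using 1 2 by simp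
      moreover have "subseq L (us @ us2)" using 1(2) by (rule subseq_rev_drop_many)
      ultimately show ?thesis using that 2(3) by blast
    qed
    obtain PY RY where PY: "Y = PY @ h # RY" "subseq L PY" "subseq H' RY"
    proof -
      obtain us vs where 1: "Y = us @ vs" "subseq L us" "subseq (h # H') vs"
        using list_emb_appendD[OF ZY'] by blast
      obtain us2 v vs2 where 2: "vs = us2 @ v # vs2" "h = v" "subseq H' vs2"
        using list_emb_ConsD[OF 1(3)] by blast
      have "Y = (us @ us2) @ h # vs2" using 1 2 by simp
      moreover have "subseq L (us @ us2)" using 1(2) by (rule subseq_rev_drop_many)
      ultimately show ?thesis using that 2(3) by blast
    qed
    have "\<exists>u\<le>i. filter (\<lambda>x. x \<le> 2*s) PX = inflate (concat (map fA [0..<Suc (u div 2)])) \<and>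
      ((even u \<and> h = 2*s+2 \<and> RX = concat (map (G fA s (2*s+2) (2*s+1)) [Suc u..<Suc i])) \<or>
      (odd u \<and> h = 2*s+1 \<and> RX = (2*s+3) # concat (map (G fA s (2*s+2) (2*s+1)) [Suc u..<Suc i])) \<or>
      (odd u \<and> h = 2*s+3 \<and> RX = concat (map (G fA s (2*s+2) (2*s+1)) [Suc u..<Suc i])))"
      by (rule G_side[OF bA _ _ i PX(1)[unfolded X_def] hhi]) simp_all
    then obtain u where u: "u \<le> i" "filter lo PX = inflate (concat (map fA [0..<Suc (u div 2)]))"
      "(even u \<and> h = 2*s+2 \<and> RX = concat (map (G fA s (2*s+2) (2*s+1)) [Suc u..<Suc i])) \<or>
      (odd u \<and> h = 2*s+1 \<and> RX = (2*s+3) # concat (map (G fA s (2*s+2) (2*s+1)) [Suc u..<Suc i])) \<or>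
      (odd u \<and> h = 2*s+3 \<and> RX = concat (map (G fA s (2*s+2) (2*s+1)) [Suc u..<Suc i]))"
      unfolding lo_def by blast
    have "\<exists>v\<le>j. filter (\<lambda>x. x \<le> 2*s) PY = inflate (concat (map fB [0..<Suc (v div 2)])) \<and>
      ((even v \<and> h = 2*s+1 \<and> RY = concat (map (G fB s (2*s+1) (2*s+2)) [Suc v..<Suc j])) \<or>
      (odd v \<and> h = 2*s+2 \<and> RY = (2*s+3) # concat (map (G fB s (2*s+1) (2*s+2)) [Suc v..<Suc j])) \<or>
      (odd v \<and> h = 2*s+3 \<and> RY = concat (map (G fB s (2*s+1) (2*s+2)) [Suc v..<Suc j])))"
      by (rule G_side[OF bB _ _ j PY(1)[unfolded Y_def] hhi]) simp_all
    then obtain v where v: "v \<le> j" "filter lo PY = inflate (concat (map fB [0..<Suc (v div 2)]))"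
      "(even v \<and> h = 2*s+1 \<and> RY = concat (map (G fB s (2*s+1) (2*s+2)) [Suc v..<Suc j])) \<or>
      (odd v \<and> h = 2*s+2 \<and> RY = (2*s+3) # concat (map (G fB s (2*s+1) (2*s+2)) [Suc v..<Suc j])) \<or>
      (odd v \<and> h = 2*s+3 \<and> RY = concat (map (G fB s (2*s+1) (2*s+2)) [Suc v..<Suc j]))"
      unfolding lo_def by blast
    have uv: "u div 2 < 2^k" "v div 2 < 2^k"
      using div2_lt[OF le_less_trans[OF u(1) i]] div2_lt[OF le_less_trans[OF v(1) j]] by auto
    have "subseq L (filter lo PX)" using PX(2) Llo by (rule subseq_filter_all)
    then have sX: "subseq L (inflate (concat (map fA [0..<Suc (u div 2)])))" using u(2) by simp
    have "subseq L (filter lo PY)" using PY(2) Llo by (rule subseq_filter_all)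
    then have sY: "subseq L (inflate (concat (map fB [0..<Suc (v div 2)])))" using v(2) by simp
    have "length L \<le> 2 * lcis (concat (map fA [0..<Suc (u div 2)])) (concat (map fB [0..<Suc (v div 2)]))"
      by (rule deflate_bound[OF Ls sX sY])
    also have "\<dots> = 2 * (u div 2 + v div 2 + 2^k)" using IH uv by simp
    finally have lenL: "length L \<le> 2 * (u div 2 + v div 2 + 2^k)" .
    have lH'X: "length H' \<le> length RX" using PX(3) by (rule list_emb_length)
    have lH'Y: "length H' \<le> length RY" using PY(3) by (rule list_emb_length)
    have pu: "even u \<Longrightarrow> 2 * (u div 2) = u" "odd u \<Longrightarrow> 2 * (u div 2) + 1 = u" by presburger+
    have pv: "even v \<Longrightarrow> 2 * (v div 2) = v" "odd v \<Longrightarrow> 2 * (v div 2) + 1 = v" by presburger+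
    have le: "u \<le> i" "v \<le> j" by (fact u(1), fact v(1))
    have arith_aux: "\<And>(a::nat) b K zl ll hl. zl = ll + 1 + hl \<Longrightarrow> ll \<le> 2 * (a + b + K) \<Longrightarrow> zl \<le> 2*a + 2*b + 2*K + 1 + hl"
      by (simp add: algebra_simps)
    have lz: "length Z \<le> 2*(u div 2) + 2*(v div 2) + 2^Suc k + 1 + length H'"
      using arith_aux[OF lenZ lenL] sK by simp
    consider (c1) "even u" "h = 2*s+2" "odd v" "u = i \<longrightarrow> RX = []"
      | (c2) "odd u" "h = 2*s+1" "even v" "u = i \<longrightarrow> length RX = 1" "v = j \<longrightarrow> RY = []"
      | (c3) "odd u" "odd v" "h = 2*s+3"
      using u(3) v(3) by auto
    then show ?thesis
    proof cases
      case c1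
      then have "length H' \<le> 1" using Hlen by simp
      moreover have "u = i \<Longrightarrow> length H' = 0" using lH'X c1 by auto
      ultimately have "u + length H' \<le> i" using le by (cases "u = i") auto
      then show ?thesis using lz pu(1)[OF c1(1)] pv(2)[OF c1(3)] le by linarith
    next
      case c2
      then have "length H' \<le> 2" using Hlen by simp
      moreover have "v = j \<Longrightarrow> length H' = 0" using lH'Y c2 by auto
      moreover have "u = i \<Longrightarrow> length H' \<le> 1" using lH'X c2 by auto
      ultimately have "u + v + length H' \<le> i + j" using le by (cases "u = i"; cases "v = j") auto
      then show ?thesis using lz pu(2)[OF c2(1)] pv(1)[OF c2(3)] le by linarith
    next
      case c3
      then have "length H' = 0" using Hlen by simp
      then show ?thesis using lz pu(2)[OF c3(1)] pv(2)[OF c3(2)] le by linarith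
    qed
  qed
qed



lemma lower:
  fixes fA fB :: "nat \<Rightarrow> int list" and s :: int
  assumes bA: "\<forall>t<2^k. \<forall>x\<in>set (fA t). x \<le> s" and bB: "\<forall>t<2^k. \<forall>x\<in>set (fB t). x \<le> s"
    and IH: "\<And>a b. a < 2^k \<Longrightarrow> b < 2^k \<Longrightarrow>
       lcis (concat (map fA [0..<Suc a])) (concat (map fB [0..<Suc b])) = a + b + 2^k"
    and i: "i < 2^Suc k" and j: "j < 2^Suc k"
  shows "\<exists>Z. sorted_wrt (<) Z \<and> subseq Z (concat (map (G fA s (2*s+2) (2*s+1)) [0..<Suc i]))
     \<and> subseq Z (concat (map (G fB s (2*s+1) (2*s+2)) [0..<Suc j])) \<and> length Z = i + j + 2^Suc k"
proof -
  define a where "a = i div 2"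
  define b where "b = j div 2"
  have ab: "a < 2^k" "b < 2^k" unfolding a_def b_def using div2_lt[OF i] div2_lt[OF j] by auto
  define XA where "XA = concat (map fA [0..<Suc a])"
  define YB where "YB = concat (map fB [0..<Suc b])"
  obtain W where W: "sorted_wrt (<) W" "subseq W XA" "subseq W YB" "length W = lcis XA YB"
    by (rule lcis_obtain)
  have lW: "length W = a + b + 2^k" using W(4) IH[OF ab] unfolding XA_def YB_def by simp
  have Wle: "\<forall>x\<in>set W. x \<le> s"
  proof
    fix x assume "x \<in> set W"
    then have "x \<in> set XA" by (rule subseq_set[OF W(2)])
    then obtain t where "t < Suc a" "x \<in> set (fA t)" unfolding XA_def by (auto simp del: upt_Suc)
    moreover have "t < 2^k" using \<open>t < Suc a\<close> ab by simp
    ultimately show "x \<le> s" using bA by blast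
  qed
  define E where "E = (if even i then (if even j then [] else [2*s+2])
                        else (if even j then [2*s+1] else [2*s+1, 2*s+3]))"
  define TX where "TX = (if even i then [2*s+2] else [2*s+2, 2*s+1, 2*s+3])"
  define TY where "TY = (if even j then [2*s+1] else [2*s+1, 2*s+2, 2*s+3])"
  have gX: "subseq (inflate XA @ TX) (concat (map (G fA s (2*s+2) (2*s+1)) [0..<Suc i]))"
    unfolding XA_def TX_def a_def by (rule G_low[OF bA _ _ i]) simp_all
  have gY: "subseq (inflate YB @ TY) (concat (map (G fB s (2*s+1) (2*s+2)) [0..<Suc j]))"
    unfolding YB_def TY_def b_def by (rule G_low[OF bB _ _ j]) simp_all
  have eX: "subseq E TX" unfolding E_def TX_def by auto
  have eY: "subseq E TY" unfolding E_def TY_def by auto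
  have zX: "subseq (inflate W @ E) (inflate XA @ TX)"
    by (rule list_emb_append_mono[OF subseq_inflate[OF W(2)] eX])
  have zY: "subseq (inflate W @ E) (inflate YB @ TY)"
    by (rule list_emb_append_mono[OF subseq_inflate[OF W(3)] eY])
  have Es: "sorted_wrt (<) E" "\<forall>y\<in>set E. 2*s < y" unfolding E_def by auto
  have iW: "\<forall>x\<in>set (inflate W). x \<le> 2*s" using Wle inflate_le by blast
  have sZ: "sorted_wrt (<) (inflate W @ E)"
    unfolding sorted_wrt_append using sorted_inflate[OF W(1)] Es iW by fastforce
  have pi: "2 * a + (if even i then 0 else 1) = i" unfolding a_def by presburger
  have pj: "2 * b + (if even j then 0 else 1) = j" unfolding b_def by presburger
  have lE: "length E = (if even i then 0 else 1) + (if even j then 0 else 1)" unfolding E_def by simp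
  have "length (inflate W) = 2 * length W" by (induction W) simp_all
  then have "length (inflate W @ E) = i + j + 2^Suc k" using lW lE pi pj by simp
  then show ?thesis
    using sZ subseq_order.order_trans[OF zX gX] subseq_order.order_trans[OF zY gY] by blast
qed

definition S :: "nat \<Rightarrow> int" where
  "S k = Max (set (concat (map (alpha k) [0..<2^k])) \<union> set (concat (map (beta k) [0..<2^k])))"

lemma alpha_Suc: "alpha (Suc k) = G (alpha k) (S k) (2 * S k + 2) (2 * S k + 1)"
  by (simp add: alpha_def beta_def S_def G_def Let_def fun_eq_iff)

lemma beta_Suc: "beta (Suc k) = G (beta k) (S k) (2 * S k + 1) (2 * S k + 2)"
  by (simp add: alpha_def beta_def S_def G_def Let_def fun_eq_iff)

lemma bnd_alpha: "\<forall>t<2^k. \<forall>x\<in>set (alpha k t). x \<le> S k"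
  unfolding S_def by (auto intro!: Max_ge)

lemma bnd_beta: "\<forall>t<2^k. \<forall>x\<in>set (beta k t). x \<le> S k"
  unfolding S_def by (auto intro!: Max_ge)

lemma main: "\<forall>i j. i < 2^k \<longrightarrow> j < 2^k \<longrightarrow>
  lcis (concat (map (alpha k) [0..<Suc i])) (concat (map (beta k) [0..<Suc j])) = i + j + 2^k"
proof (induction k)
  case 0
  have a0: "alpha 0 0 = [1]" "beta 0 0 = [1]" by (simp_all add: alpha_def beta_def)
  have "lcis [1] [1] = 1"
  proof (rule lcis_eqI[of "[1]"])
    fix Z :: "int list" assume "subseq Z [1]"
    then show "length Z \<le> 1" using list_emb_length by fastforce
  qed simp_all
  then show ?case using a0 by simp
next
  case (Suc k)
  have IH: "\<And>a b. a < 2^k \<Longrightarrow> b < 2^k \<Longrightarrow>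
       lcis (concat (map (alpha k) [0..<Suc a])) (concat (map (beta k) [0..<Suc b])) = a + b + 2^k"
    using Suc.IH by blast
  show ?case
  proof (intro allI impI)
    fix i j :: nat assume i: "i < 2^Suc k" and j: "j < 2^Suc k"
    obtain Z where Z: "sorted_wrt (<) Z" "subseq Z (concat (map (G (alpha k) (S k) (2*S k+2) (2*S k+1)) [0..<Suc i]))"
      "subseq Z (concat (map (G (beta k) (S k) (2*S k+1) (2*S k+2)) [0..<Suc j]))" "length Z = i + j + 2^Suc k"
      using lower[OF bnd_alpha bnd_beta IH i j] by blast
    show "lcis (concat (map (alpha (Suc k)) [0..<Suc i])) (concat (map (beta (Suc k)) [0..<Suc j])) = i + j + 2^Suc k"
      unfolding alpha_Suc beta_Suc
      by (rule lcis_eqI[OF Z]) (rule upper[OF bnd_alpha bnd_beta IH i j], assumption+)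
  qed
qed


theorem lemma11:
  fixes k i j :: nat
  assumes "i < 2^k" and "j < 2^k"
  shows "lcis (concat (map (alpha k) [0..<Suc i])) (concat (map (beta k) [0..<Suc j]))
         = i + j + 2^k"
  using main assms by blast

end
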